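(* For allocating $m$ indivisible chores to $n$ agents with additive disvaluation functions and equal responsibilities, there is an allocation mechanism such that: (1) it is ex-ante EF-RA; (2) every agent $i$ that follows the greedy picking strategy receives a bundle of expected disvalue at most her proportional share $\frac1n c_i(\mathcal M)$; and (3) every agent $i$ that follows the greedy picking strategy receives ex-post a bundle of disvalue at most $\frac85\,CS_i$.
   Context: Agents have additive disvaluations $c_i\ge0$ over the chore set $\mathcal M$, all with responsibility $1/n$. Mechanisms are (possibly randomized) multi-round procedures, e.g. a preliminary phase assigning the $n$ labels of a picking sequence $\pi\in[n]^m$ to the agents, followed by rounds in which the holder of label $\pi_r$ takes one remaining chore. Greedy picking strategy: take a remaining chore of smallest own disvalue. A risk averse agent evaluates a role by the smallest expected disvalue she can guarantee with her best strategy against worst-case behaviour of all other agents. EF-RA: no risk averse agent would, before the mechanism runs, strictly prefer (under this evaluation) to be in the role of another agent of equal or higher responsibility. $CS_i=\max\{\frac1nc_i(\mathcal M),d_1,d_n+d_{n+1}\}$, $d_1\ge d_2\ge\cdots$ the disvalues under $c_i$ sorted non-increasingly, padded with zeros. *)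

theory Defs
  imports "HOL-Probability.Probability"
begin

text \<open>Agents are 0..<n, chores are 0..<m (natural numbers). A disvaluation profile is
  c :: nat => nat => real, c i j = disvalue of chore j for agent i.
  A (randomized picking) mechanism is a probability distribution D over agent sequences
  tau (lists of length m with entries < n): in round r agent tau!r takes one remaining chore.
  The realised sequence is revealed at the start, so strategies may depend on it.
  (A random assignment of the labels of a picking sequence pi to the agents is the special
  case where tau = map (inverse label assignment) pi.)\<close>

definition remaining :: "nat \<Rightarrow> nat list \<Rightarrow> nat set" where
  "remaining m h = {0..<m} - set h"

text \<open>A strategy maps (agent sequence, history of chores taken so far) to a chore.\<close>
type_synonym strategy = "nat list \<Rightarrow> nat list \<Rightarrow> nat"

text \<open>Run of the picking rounds under a strategy profile P. An illegal choice is replaced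
  by the remaining chore of smallest index (this does not change the set of achievable plays).\<close>
fun run :: "(nat \<Rightarrow> strategy) \<Rightarrow> nat list \<Rightarrow> nat \<Rightarrow> nat \<Rightarrow> nat list" where
  "run P tau m 0 = []"
| "run P tau m (Suc r) =
     (let h = run P tau m r; x = P (tau ! r) tau h
      in h @ [if x \<in> remaining m h then x else Min (remaining m h)])"

definition disvalue :: "(nat \<Rightarrow> real) \<Rightarrow> nat \<Rightarrow> nat list \<Rightarrow> (nat \<Rightarrow> strategy) \<Rightarrow> nat \<Rightarrow> real" where
  "disvalue ci m tau P i =
     (let h = run P tau m m in \<Sum>r<m. if tau ! r = i then ci (h ! r) else 0)"

definition valid_mechanism :: "nat \<Rightarrow> nat \<Rightarrow> nat list pmf \<Rightarrow> bool" where
  "valid_mechanism n m D \<longleftrightarrow> finite (set_pmf D) \<and>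
     (\<forall>tau\<in>set_pmf D. length tau = m \<and> set tau \<subseteq> {..<n})"

definition ra_value :: "(nat \<Rightarrow> real) \<Rightarrow> nat \<Rightarrow> nat list pmf \<Rightarrow> nat \<Rightarrow> real" where
  "ra_value ci m D j =
     (INF s::strategy. SUP Q::nat \<Rightarrow> strategy.
        measure_pmf.expectation D (\<lambda>tau. disvalue ci m tau (Q(j := s)) j))"

text \<open>EF-RA (all responsibilities equal to 1/n, so every role j is of equal responsibility).\<close>
definition EF_RA :: "nat \<Rightarrow> nat \<Rightarrow> nat list pmf \<Rightarrow> (nat \<Rightarrow> nat \<Rightarrow> real) \<Rightarrow> bool" where
  "EF_RA n m D c \<longleftrightarrow>
     (\<forall>i<n. \<forall>j<n. \<not> (ra_value (c i) m D j < ra_value (c i) m D i))"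

definition greedy :: "(nat \<Rightarrow> real) \<Rightarrow> nat \<Rightarrow> strategy \<Rightarrow> bool" where
  "greedy ci m s \<longleftrightarrow> (\<forall>tau h. remaining m h \<noteq> {} \<longrightarrow>
      s tau h \<in> remaining m h \<and> (\<forall>y\<in>remaining m h. ci (s tau h) \<le> ci y))"

text \<open>d_(k+1): the k-th (0-based) largest disvalue, padded with zeros.\<close>
definition dsorted :: "(nat \<Rightarrow> real) \<Rightarrow> nat \<Rightarrow> nat \<Rightarrow> real" where
  "dsorted ci m k = (let L = rev (sort (map ci [0..<m])) in if k < length L then L ! k else 0)"

definition CS :: "(nat \<Rightarrow> real) \<Rightarrow> nat \<Rightarrow> nat \<Rightarrow> real" where
  "CS ci n m = max ((\<Sum>j<m. ci j) / real n)
                   (max (dsorted ci m 0) (dsorted ci m (n - 1) + dsorted ci m n))"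

end

theory Submission
  imports Defs
begin


definition la :: "int \<Rightarrow> int" where "la n = n div 4"
definition lb :: "int \<Rightarrow> int" where "lb n = 2 * n div 5"
definition hb :: "int \<Rightarrow> int" where "hb n = lb n - la n"

lemma facts: "4 * la n \<le> n" "n < 4 * la n + 4" "5 * lb n \<le> 2 * n" "2 * n < 5 * lb n + 5" "hb n + la n = lb n"
  unfolding la_def lb_def hb_def by linarith+

definition ownr :: "int \<Rightarrow> nat \<Rightarrow> int \<Rightarrow> int" where
"ownr n v q = (let l1 = la n; l2 = lb n; h2 = hb n in
  if v = 0 then (if q \<le> n - l2 then n + 1 - q else if q \<le> n - h2 then n - h2 + 1 - q else q)
  else if v = 1 then (if q \<le> h2 then l1 + q else if q \<le> l2 then (n - l2 - h2) + q
     else if q \<le> n - l2 then n + 1 - q else if q \<le> n - h2 then 2*n - l2 - h2 + 1 - q else q)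
  else if v = 2 then (if q \<le> h2 then l1 + q else if q \<le> l2 then l2 + 1 - q
     else if q \<le> n - l2 then n + 1 - q else if q \<le> n - h2 then 2*n - l2 - h2 + 1 - q else q)
  else if v = 3 then (if q \<le> h2 then l1 + q else if q \<le> n - l2 then n + 1 - q
     else if q \<le> n - l1 then q + l1 else 2*n - l2 + 1 - q)
  else (if q \<le> l1 then q else if q \<le> l2 then l1 + l2 + 1 - q
     else if q \<le> n - l2 then n + 1 - q else if q \<le> n - l1 then q + l1 else 2*n - l2 + 1 - q))"

definition posl :: "int \<Rightarrow> int \<Rightarrow> nat \<Rightarrow> int list" where
"posl n j v = (let l1 = la n; l2 = lb n; h2 = hb n in
  if j \<le> l1 then (if v = 0 then [n - h2 + 1 - j] else if v = 2 then [l2 + 1 - j] else if v = 4 then [j] else [])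
  else if j \<le> l2 then (if v = 0 then [] else if v = 4 then [l1 + l2 + 1 - j] else [j - l1])
  else if j \<le> n - l2 then [n + 1 - j]
  else if j \<le> n - h2 then (if v = 0 then [n + 1 - j] else if v = 1 then [j + l2 + h2 - n, 2*n - l2 - h2 + 1 - j]
      else if v = 2 then [2*n - l2 - h2 + 1 - j] else if v = 3 then [n + 1 - j, 2*n - l2 + 1 - j]
      else [2*n - l2 + 1 - j])
  else (if v = 0 then [n + 1 - j, j] else if v = 1 then [j] else if v = 2 then [j] else [j - l1]))"

lemma ownr_pos0:
  assumes "1 \<le> q" "q \<le> n" "ownr n 0 q = j"
  shows "q \<in> set (posl n j 0)"
  using assms facts[of n] unfolding ownr_def posl_def Let_def by (simp split: if_splits; linarith)
lemma ownr_rng0: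
  assumes "1 \<le> q" "q \<le> n"
  shows "1 \<le> ownr n 0 q \<and> ownr n 0 q \<le> n"
  using assms facts[of n] unfolding ownr_def Let_def by (simp split: if_splits; linarith)
lemma ownr_pos1:
  assumes "1 \<le> q" "q \<le> n" "ownr n 1 q = j"
  shows "q \<in> set (posl n j 1)"
  using assms facts[of n] unfolding ownr_def posl_def Let_def by (simp split: if_splits; linarith)
lemma ownr_rng1:
  assumes "1 \<le> q" "q \<le> n"
  shows "1 \<le> ownr n 1 q \<and> ownr n 1 q \<le> n"
  using assms facts[of n] unfolding ownr_def Let_def by (simp split: if_splits; linarith)
lemma ownr_pos2:
  assumes "1 \<le> q" "q \<le> n" "ownr n 2 q = j"
  shows "q \<in> set (posl n j 2)"
  using assms facts[of n] unfolding ownr_def posl_def Let_def by (simp split: if_splits; linarith)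
lemma ownr_rng2:
  assumes "1 \<le> q" "q \<le> n"
  shows "1 \<le> ownr n 2 q \<and> ownr n 2 q \<le> n"
  using assms facts[of n] unfolding ownr_def Let_def by (simp split: if_splits; linarith)
lemma ownr_pos3:
  assumes "1 \<le> q" "q \<le> n" "ownr n 3 q = j"
  shows "q \<in> set (posl n j 3)"
  using assms facts[of n] unfolding ownr_def posl_def Let_def by (simp split: if_splits; linarith)
lemma ownr_rng3:
  assumes "1 \<le> q" "q \<le> n"
  shows "1 \<le> ownr n 3 q \<and> ownr n 3 q \<le> n"
  using assms facts[of n] unfolding ownr_def Let_def by (simp split: if_splits; linarith)
lemma ownr_pos4:
  assumes "1 \<le> q" "q \<le> n" "ownr n 4 q = j"
  shows "q \<in> set (posl n j 4)"
  using assms facts[of n] unfolding ownr_def posl_def Let_def by (simp split: if_splits; linarith)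
lemma ownr_rng4:
  assumes "1 \<le> q" "q \<le> n"
  shows "1 \<le> ownr n 4 q \<and> ownr n 4 q \<le> n"
  using assms facts[of n] unfolding ownr_def Let_def by (simp split: if_splits; linarith)


definition a5 :: "int \<Rightarrow> int \<Rightarrow> int" where
"a5 n j = (if j \<le> la n then 3 else if j \<le> lb n then 4 else if j \<le> n - lb n then 5
   else if j \<le> n - hb n then 7 else 6)"

definition pre :: "int \<Rightarrow> int \<Rightarrow> nat \<Rightarrow> nat" where
"pre n j v = (\<Sum>w<v. length (posl n j w))"

abbreviation IQ where "IQ n j v q \<equiv> 5 * n * int (1 + pre n j v + length (filter (\<lambda>p. p \<le> q) (posl n j v)))
     \<le> a5 n j * (n * (1 + int v) + q) + (16 - 2 * a5 n j) * n - max 0 (5 * n - a5 n j * j)"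

lemma ineqL1:
  assumes "1 \<le> j" "j \<le> la n" "1 \<le> j" "j \<le> n" "0 \<le> q" "q \<le> n" "v < 5"
  shows "IQ n j v q"
proof -
  have f: "4 * la n \<le> n" "n < 4 * la n + 4" "5 * lb n \<le> 2 * n" "2 * n < 5 * lb n + 5" "hb n = lb n - la n"
    using facts[of n] by linarith+
  have a: "a5 n j = 3" using assms f unfolding a5_def by auto
  have p: "posl n j v = (if v = 0 then [n - hb n + 1 - j] else if v = 2 then [lb n + 1 - j] else if v = 4 then [j] else [])" for v
    using assms f unfolding posl_def Let_def by auto
  have v: "v = 0 \<or> v = 1 \<or> v = 2 \<or> v = 3 \<or> v = 4" using assms by arith
  have "v = 0 \<Longrightarrow> ?thesis" using assms f unfolding a by (simp add: p pre_def; linarith)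
  moreover have "v = 1 \<Longrightarrow> ?thesis" using assms f unfolding a by (simp add: p pre_def; linarith)
  moreover have "v = 2 \<Longrightarrow> ?thesis" using assms f unfolding a by (simp add: p pre_def numeral_eq_Suc lessThan_Suc; linarith)
  moreover have "v = 3 \<Longrightarrow> ?thesis" using assms f unfolding a by (simp add: p pre_def numeral_eq_Suc lessThan_Suc; linarith)
  moreover have "v = 4 \<Longrightarrow> ?thesis" using assms f unfolding a by (simp add: p pre_def numeral_eq_Suc lessThan_Suc; linarith)
  ultimately show ?thesis using v by blast
qed

lemma ineqL2:
  assumes "la n < j" "j \<le> lb n" "1 \<le> j" "j \<le> n" "0 \<le> q" "q \<le> n" "v < 5"
  shows "IQ n j v q"
proof -
  have f: "4 * la n \<le> n" "n < 4 * la n + 4" "5 * lb n \<le> 2 * n" "2 * n < 5 * lb n + 5" "hb n = lb n - la n"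
    using facts[of n] by linarith+
  have a: "a5 n j = 4" using assms f unfolding a5_def by auto
  have p: "posl n j v = (if v = 0 then [] else if v = 4 then [la n + lb n + 1 - j] else [j - la n])" for v
    using assms f unfolding posl_def Let_def by auto
  have v: "v = 0 \<or> v = 1 \<or> v = 2 \<or> v = 3 \<or> v = 4" using assms by arith
  have "v = 0 \<Longrightarrow> ?thesis" using assms f unfolding a by (simp add: p pre_def; linarith)
  moreover have "v = 1 \<Longrightarrow> ?thesis" using assms f unfolding a by (simp add: p pre_def; linarith)
  moreover have "v = 2 \<Longrightarrow> ?thesis" using assms f unfolding a by (simp add: p pre_def numeral_eq_Suc lessThan_Suc; linarith)
  moreover have "v = 3 \<Longrightarrow> ?thesis" using assms f unfolding a by (simp add: p pre_def numeral_eq_Suc lessThan_Suc; linarith)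
  moreover have "v = 4 \<Longrightarrow> ?thesis" using assms f unfolding a by (simp add: p pre_def numeral_eq_Suc lessThan_Suc; linarith)
  ultimately show ?thesis using v by blast
qed

lemma ineqM:
  assumes "lb n < j" "j \<le> n - lb n" "1 \<le> j" "j \<le> n" "0 \<le> q" "q \<le> n" "v < 5"
  shows "IQ n j v q"
proof -
  have f: "4 * la n \<le> n" "n < 4 * la n + 4" "5 * lb n \<le> 2 * n" "2 * n < 5 * lb n + 5" "hb n = lb n - la n"
    using facts[of n] by linarith+
  have a: "a5 n j = 5" using assms f unfolding a5_def by auto
  have p: "posl n j v = [n + 1 - j]" for v
    using assms f unfolding posl_def Let_def by auto
  have v: "v = 0 \<or> v = 1 \<or> v = 2 \<or> v = 3 \<or> v = 4" using assms by arith
  have "v = 0 \<Longrightarrow> ?thesis" using assms f unfolding a by (simp add: p pre_def; linarith)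
  moreover have "v = 1 \<Longrightarrow> ?thesis" using assms f unfolding a by (simp add: p pre_def; linarith)
  moreover have "v = 2 \<Longrightarrow> ?thesis" using assms f unfolding a by (simp add: p pre_def numeral_eq_Suc lessThan_Suc; linarith)
  moreover have "v = 3 \<Longrightarrow> ?thesis" using assms f unfolding a by (simp add: p pre_def numeral_eq_Suc lessThan_Suc; linarith)
  moreover have "v = 4 \<Longrightarrow> ?thesis" using assms f unfolding a by (simp add: p pre_def numeral_eq_Suc lessThan_Suc; linarith)
  ultimately show ?thesis using v by blast
qed

lemma ineqH1:
  assumes "n - lb n < j" "j \<le> n - hb n" "1 \<le> j" "j \<le> n" "0 \<le> q" "q \<le> n" "v < 5"
  shows "IQ n j v q"
proof -
  have f: "4 * la n \<le> n" "n < 4 * la n + 4" "5 * lb n \<le> 2 * n" "2 * n < 5 * lb n + 5" "hb n = lb n - la n"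
    using facts[of n] by linarith+
  have a: "a5 n j = 7" using assms f unfolding a5_def by auto
  have p: "posl n j v = (if v = 0 then [n + 1 - j] else if v = 1 then [j + lb n + hb n - n, 2*n - lb n - hb n + 1 - j] else if v = 2 then [2*n - lb n - hb n + 1 - j] else if v = 3 then [n + 1 - j, 2*n - lb n + 1 - j] else [2*n - lb n + 1 - j])" for v
    using assms f unfolding posl_def Let_def by auto
  have v: "v = 0 \<or> v = 1 \<or> v = 2 \<or> v = 3 \<or> v = 4" using assms by arith
  have "v = 0 \<Longrightarrow> ?thesis" using assms f unfolding a by (simp add: p pre_def; linarith)
  moreover have "v = 1 \<Longrightarrow> ?thesis" using assms f unfolding a by (simp add: p pre_def; linarith)
  moreover have "v = 2 \<Longrightarrow> ?thesis" using assms f unfolding a by (simp add: p pre_def numeral_eq_Suc lessThan_Suc; linarith)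
  moreover have "v = 3 \<Longrightarrow> ?thesis" using assms f unfolding a by (simp add: p pre_def numeral_eq_Suc lessThan_Suc; linarith)
  moreover have "v = 4 \<Longrightarrow> ?thesis" using assms f unfolding a by (simp add: p pre_def numeral_eq_Suc lessThan_Suc; linarith)
  ultimately show ?thesis using v by blast
qed

lemma ineqH2:
  assumes "n - hb n < j" "j \<le> n" "1 \<le> j" "j \<le> n" "0 \<le> q" "q \<le> n" "v < 5"
  shows "IQ n j v q"
proof -
  have f: "4 * la n \<le> n" "n < 4 * la n + 4" "5 * lb n \<le> 2 * n" "2 * n < 5 * lb n + 5" "hb n = lb n - la n"
    using facts[of n] by linarith+
  have a: "a5 n j = 6" using assms f unfolding a5_def by auto
  have p: "posl n j v = (if v = 0 then [n + 1 - j, j] else if v = 1 then [j] else if v = 2 then [j] else [j - la n])" for v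
    using assms f unfolding posl_def Let_def by auto
  have v: "v = 0 \<or> v = 1 \<or> v = 2 \<or> v = 3 \<or> v = 4" using assms by arith
  have "v = 0 \<Longrightarrow> ?thesis" using assms f unfolding a by (simp add: p pre_def; linarith)
  moreover have "v = 1 \<Longrightarrow> ?thesis" using assms f unfolding a by (simp add: p pre_def; linarith)
  moreover have "v = 2 \<Longrightarrow> ?thesis" using assms f unfolding a by (simp add: p pre_def numeral_eq_Suc lessThan_Suc; linarith)
  moreover have "v = 3 \<Longrightarrow> ?thesis" using assms f unfolding a by (simp add: p pre_def numeral_eq_Suc lessThan_Suc; linarith)
  moreover have "v = 4 \<Longrightarrow> ?thesis" using assms f unfolding a by (simp add: p pre_def numeral_eq_Suc lessThan_Suc; linarith)
  ultimately show ?thesis using v by blast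
qed

lemma ownr_pos:
  assumes "1 \<le> q" "q \<le> n" "v < 5" "ownr n v q = j"
  shows "q \<in> set (posl n j v)"
proof -
  have "v = 0 \<or> v = 1 \<or> v = 2 \<or> v = 3 \<or> v = 4" using assms by arith
  moreover have "v = 0 \<Longrightarrow> ?thesis" using ownr_pos0[of q n j] assms by simp
  moreover have "v = 1 \<Longrightarrow> ?thesis" using ownr_pos1[of q n j] assms by simp
  moreover have "v = 2 \<Longrightarrow> ?thesis" using ownr_pos2[of q n j] assms by simp
  moreover have "v = 3 \<Longrightarrow> ?thesis" using ownr_pos3[of q n j] assms by simp
  moreover have "v = 4 \<Longrightarrow> ?thesis" using ownr_pos4[of q n j] assms by simp
  ultimately show ?thesis by blast
qed

lemma ownr_rng:
  assumes "1 \<le> q" "q \<le> n" "v < 5"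
  shows "1 \<le> ownr n v q \<and> ownr n v q \<le> n"
proof -
  have "v = 0 \<or> v = 1 \<or> v = 2 \<or> v = 3 \<or> v = 4" using assms by arith
  moreover have "v = 0 \<Longrightarrow> ?thesis" using ownr_rng0[of q n] assms by simp
  moreover have "v = 1 \<Longrightarrow> ?thesis" using ownr_rng1[of q n] assms by simp
  moreover have "v = 2 \<Longrightarrow> ?thesis" using ownr_rng2[of q n] assms by simp
  moreover have "v = 3 \<Longrightarrow> ?thesis" using ownr_rng3[of q n] assms by simp
  moreover have "v = 4 \<Longrightarrow> ?thesis" using ownr_rng4[of q n] assms by simp
  ultimately show ?thesis by blast
qed

lemma IQ_all:
  assumes "1 \<le> j" "j \<le> n" "0 \<le> q" "q \<le> n" "v < 5"
  shows "IQ n j v q"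
proof -
  have "j \<le> la n \<or> (la n < j \<and> j \<le> lb n) \<or> (lb n < j \<and> j \<le> n - lb n) \<or>
        (n - lb n < j \<and> j \<le> n - hb n) \<or> n - hb n < j" by linarith
  moreover have "j \<le> la n \<Longrightarrow> ?thesis" using ineqL1[of j n q v] assms by simp
  moreover have "la n < j \<and> j \<le> lb n \<Longrightarrow> ?thesis" using ineqL2[of n j q v] assms by simp
  moreover have "lb n < j \<and> j \<le> n - lb n \<Longrightarrow> ?thesis" using ineqM[of n j q v] assms by simp
  moreover have "n - lb n < j \<and> j \<le> n - hb n \<Longrightarrow> ?thesis" using ineqH1[of n j q v] assms by simp
  moreover have "n - hb n < j \<Longrightarrow> ?thesis" using ineqH2[of n j q v] assms by simp
  ultimately show ?thesis by blast
qed

lemma a5_pos: "0 \<le> a5 n j" unfolding a5_def by simp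
definition own0 :: "nat \<Rightarrow> nat \<Rightarrow> nat" where
"own0 n x = (if x < n then x else nat (ownr (int n) (((x - n) div n) mod 5) (int ((x - n) mod n) + 1)) - 1)"

lemma own0_lt: "1 \<le> n \<Longrightarrow> own0 n x < n"
proof -
  assume n: "1 \<le> n"
  show ?thesis
  proof (cases "x < n")
    case True then show ?thesis by (simp add: own0_def)
  next
    case False
    have "(x - n) mod n < n" using n by simp
    then have "1 \<le> ownr (int n) (((x - n) div n) mod 5) (int ((x - n) mod n) + 1) \<and>
      ownr (int n) (((x - n) div n) mod 5) (int ((x - n) mod n) + 1) \<le> int n"
      by (intro ownr_rng) auto
    then show ?thesis using False by (simp add: own0_def) linarith
  qed
qed

lemma own0_tail:
  assumes "q < n"
  shows "own0 n (n + T * n + q) = nat (ownr (int n) (T mod 5) (int q + 1)) - 1"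
proof -
  have "(T * n + q) div n = T" "(T * n + q) mod n = q" using assms by auto
  then show ?thesis by (simp add: own0_def)
qed

lemma own0_tail_eq:
  assumes "q < n" "j0 < n"
  shows "own0 n (n + T * n + q) = j0 \<longleftrightarrow> ownr (int n) (T mod 5) (int q + 1) = int j0 + 1"
proof -
  have "1 \<le> ownr (int n) (T mod 5) (int q + 1) \<and> ownr (int n) (T mod 5) (int q + 1) \<le> int n"
    using assms by (intro ownr_rng) auto
  then show ?thesis unfolding own0_tail[OF assms(1)] by linarith
qed

lemma round_count:
  assumes "q \<le> n" "j0 < n"
  shows "card {x. n + T * n \<le> x \<and> x < n + T * n + q \<and> own0 n x = j0}
     \<le> length (filter (\<lambda>p. p \<le> int q) (posl (int n) (int j0 + 1) (T mod 5)))"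
proof -
  let ?S = "{q'. q' < q \<and> ownr (int n) (T mod 5) (int q' + 1) = int j0 + 1}"
  have e: "{x. n + T * n \<le> x \<and> x < n + T * n + q \<and> own0 n x = j0} = (\<lambda>q'. n + T * n + q') ` ?S"
  proof (rule set_eqI, rule iffI)
    fix x assume "x \<in> {x. n + T * n \<le> x \<and> x < n + T * n + q \<and> own0 n x = j0}"
    then have x: "n + T * n \<le> x" "x < n + T * n + q" "own0 n x = j0" by auto
    define q' where "q' = x - (n + T * n)"
    have xq: "x = n + T * n + q'" "q' < q" using x unfolding q'_def by auto
    then have "ownr (int n) (T mod 5) (int q' + 1) = int j0 + 1"
      using own0_tail_eq[of q' n j0 T] x assms by auto
    then show "x \<in> (\<lambda>q'. n + T * n + q') ` ?S" using xq by auto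
  next
    fix x assume "x \<in> (\<lambda>q'. n + T * n + q') ` ?S"
    then obtain q' where "q' < q" "ownr (int n) (T mod 5) (int q' + 1) = int j0 + 1" "x = n + T * n + q'" by auto
    then show "x \<in> {x. n + T * n \<le> x \<and> x < n + T * n + q \<and> own0 n x = j0}"
      using own0_tail_eq[of q' n j0 T] assms by auto
  qed
  have "card ?S = card ((\<lambda>q'. int q' + 1) ` ?S)" by (rule card_image[symmetric]) (auto simp: inj_on_def)
  also have "\<dots> \<le> card (set (filter (\<lambda>p. p \<le> int q) (posl (int n) (int j0 + 1) (T mod 5))))"
  proof (rule card_mono)
    show "(\<lambda>q'. int q' + 1) ` ?S \<subseteq> set (filter (\<lambda>p. p \<le> int q) (posl (int n) (int j0 + 1) (T mod 5)))"
    proof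
      fix p assume "p \<in> (\<lambda>q'. int q' + 1) ` ?S"
      then obtain q' where q': "q' < q" "ownr (int n) (T mod 5) (int q' + 1) = int j0 + 1" "p = int q' + 1" by auto
      have "int q' + 1 \<in> set (posl (int n) (int j0 + 1) (T mod 5))"
        using q' assms by (intro ownr_pos) auto
      then show "p \<in> set (filter (\<lambda>p. p \<le> int q) (posl (int n) (int j0 + 1) (T mod 5)))" using q' by auto
    qed
  qed simp
  also have "\<dots> \<le> length (filter (\<lambda>p. p \<le> int q) (posl (int n) (int j0 + 1) (T mod 5)))" by (rule card_length)
  finally have "card ?S \<le> length (filter (\<lambda>p. p \<le> int q) (posl (int n) (int j0 + 1) (T mod 5)))" .
  moreover have "card ((\<lambda>q'. n + T * n + q') ` ?S) \<le> card ?S" by (rule card_image_le) simp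
  ultimately show ?thesis unfolding e by linarith
qed


lemma pgL1:
  assumes "1 \<le> j" "j \<le> la n" "1 \<le> j" "j \<le> n"
  shows "int (pre n j 5) = a5 n j \<and> a5 n j * n + max 0 (5 * n - a5 n j * j) \<le> 8 * n"
proof -
  have f: "4 * la n \<le> n" "n < 4 * la n + 4" "5 * lb n \<le> 2 * n" "2 * n < 5 * lb n + 5" "hb n = lb n - la n"
    using facts[of n] by linarith+
  have a: "a5 n j = 3" using assms f unfolding a5_def by auto
  have p: "posl n j v = (if v = 0 then [n - hb n + 1 - j] else if v = 2 then [lb n + 1 - j] else if v = 4 then [j] else [])" for v
    using assms f unfolding posl_def Let_def by auto
  have "int (pre n j 5) = a5 n j" unfolding a by (simp add: p pre_def numeral_eq_Suc lessThan_Suc)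
  moreover have "a5 n j * n + max 0 (5 * n - a5 n j * j) \<le> 8 * n" unfolding a using assms f by linarith
  ultimately show ?thesis by blast
qed

lemma pgL2:
  assumes "la n < j" "j \<le> lb n" "1 \<le> j" "j \<le> n"
  shows "int (pre n j 5) = a5 n j \<and> a5 n j * n + max 0 (5 * n - a5 n j * j) \<le> 8 * n"
proof -
  have f: "4 * la n \<le> n" "n < 4 * la n + 4" "5 * lb n \<le> 2 * n" "2 * n < 5 * lb n + 5" "hb n = lb n - la n"
    using facts[of n] by linarith+
  have a: "a5 n j = 4" using assms f unfolding a5_def by auto
  have p: "posl n j v = (if v = 0 then [] else if v = 4 then [la n + lb n + 1 - j] else [j - la n])" for v
    using assms f unfolding posl_def Let_def by auto
  have "int (pre n j 5) = a5 n j" unfolding a by (simp add: p pre_def numeral_eq_Suc lessThan_Suc)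
  moreover have "a5 n j * n + max 0 (5 * n - a5 n j * j) \<le> 8 * n" unfolding a using assms f by linarith
  ultimately show ?thesis by blast
qed

lemma pgM:
  assumes "lb n < j" "j \<le> n - lb n" "1 \<le> j" "j \<le> n"
  shows "int (pre n j 5) = a5 n j \<and> a5 n j * n + max 0 (5 * n - a5 n j * j) \<le> 8 * n"
proof -
  have f: "4 * la n \<le> n" "n < 4 * la n + 4" "5 * lb n \<le> 2 * n" "2 * n < 5 * lb n + 5" "hb n = lb n - la n"
    using facts[of n] by linarith+
  have a: "a5 n j = 5" using assms f unfolding a5_def by auto
  have p: "posl n j v = [n + 1 - j]" for v
    using assms f unfolding posl_def Let_def by auto
  have "int (pre n j 5) = a5 n j" unfolding a by (simp add: p pre_def numeral_eq_Suc lessThan_Suc)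
  moreover have "a5 n j * n + max 0 (5 * n - a5 n j * j) \<le> 8 * n" unfolding a using assms f by linarith
  ultimately show ?thesis by blast
qed

lemma pgH1:
  assumes "n - lb n < j" "j \<le> n - hb n" "1 \<le> j" "j \<le> n"
  shows "int (pre n j 5) = a5 n j \<and> a5 n j * n + max 0 (5 * n - a5 n j * j) \<le> 8 * n"
proof -
  have f: "4 * la n \<le> n" "n < 4 * la n + 4" "5 * lb n \<le> 2 * n" "2 * n < 5 * lb n + 5" "hb n = lb n - la n"
    using facts[of n] by linarith+
  have a: "a5 n j = 7" using assms f unfolding a5_def by auto
  have p: "posl n j v = (if v = 0 then [n + 1 - j] else if v = 1 then [j + lb n + hb n - n, 2*n - lb n - hb n + 1 - j] else if v = 2 then [2*n - lb n - hb n + 1 - j] else if v = 3 then [n + 1 - j, 2*n - lb n + 1 - j] else [2*n - lb n + 1 - j])" for v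
    using assms f unfolding posl_def Let_def by auto
  have "int (pre n j 5) = a5 n j" unfolding a by (simp add: p pre_def numeral_eq_Suc lessThan_Suc)
  moreover have "a5 n j * n + max 0 (5 * n - a5 n j * j) \<le> 8 * n" unfolding a using assms f by linarith
  ultimately show ?thesis by blast
qed

lemma pgH2:
  assumes "n - hb n < j" "j \<le> n" "1 \<le> j" "j \<le> n"
  shows "int (pre n j 5) = a5 n j \<and> a5 n j * n + max 0 (5 * n - a5 n j * j) \<le> 8 * n"
proof -
  have f: "4 * la n \<le> n" "n < 4 * la n + 4" "5 * lb n \<le> 2 * n" "2 * n < 5 * lb n + 5" "hb n = lb n - la n"
    using facts[of n] by linarith+
  have a: "a5 n j = 6" using assms f unfolding a5_def by auto
  have p: "posl n j v = (if v = 0 then [n + 1 - j, j] else if v = 1 then [j] else if v = 2 then [j] else [j - la n])" for v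
    using assms f unfolding posl_def Let_def by auto
  have "int (pre n j 5) = a5 n j" unfolding a by (simp add: p pre_def numeral_eq_Suc lessThan_Suc)
  moreover have "a5 n j * n + max 0 (5 * n - a5 n j * j) \<le> 8 * n" unfolding a using assms f by linarith
  ultimately show ?thesis by blast
qed

lemma pg_all:
  assumes "1 \<le> j" "j \<le> n"
  shows "int (pre n j 5) = a5 n j \<and> a5 n j * n + max 0 (5 * n - a5 n j * j) \<le> 8 * n"
proof -
  have "j \<le> la n \<or> (la n < j \<and> j \<le> lb n) \<or> (lb n < j \<and> j \<le> n - lb n) \<or>
        (n - lb n < j \<and> j \<le> n - hb n) \<or> n - hb n < j" by linarith
  moreover have "j \<le> la n \<Longrightarrow> ?thesis" using pgL1[of j n] assms by simp
  moreover have "la n < j \<and> j \<le> lb n \<Longrightarrow> ?thesis" using pgL2[of n j] assms by simp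
  moreover have "lb n < j \<and> j \<le> n - lb n \<Longrightarrow> ?thesis" using pgM[of n j] assms by simp
  moreover have "n - lb n < j \<and> j \<le> n - hb n \<Longrightarrow> ?thesis" using pgH1[of n j] assms by simp
  moreover have "n - hb n < j \<Longrightarrow> ?thesis" using pgH2[of n j] assms by simp
  ultimately show ?thesis by blast
qed


definition cnt :: "nat \<Rightarrow> nat \<Rightarrow> nat \<Rightarrow> nat" where
"cnt n j0 K = card {x. x < K \<and> own0 n x = j0}"

definition cum :: "int \<Rightarrow> int \<Rightarrow> nat \<Rightarrow> int" where
"cum n j T = a5 n j * int (T div 5) + int (pre n j (T mod 5))"

lemma cnt_split:
  assumes "A \<le> B"
  shows "cnt n j0 B \<le> cnt n j0 A + card {x. A \<le> x \<and> x < B \<and> own0 n x = j0}"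
proof -
  have "{x. x < B \<and> own0 n x = j0} \<subseteq> {x. x < A \<and> own0 n x = j0} \<union> {x. A \<le> x \<and> x < B \<and> own0 n x = j0}"
    by auto
  then have "card {x. x < B \<and> own0 n x = j0} \<le> card ({x. x < A \<and> own0 n x = j0} \<union> {x. A \<le> x \<and> x < B \<and> own0 n x = j0})"
    by (intro card_mono) auto
  also have "\<dots> \<le> card {x. x < A \<and> own0 n x = j0} + card {x. A \<le> x \<and> x < B \<and> own0 n x = j0}"
    by (rule card_Un_le)
  finally show ?thesis unfolding cnt_def .
qed

lemma cnt_head: "cnt n j0 K \<le> (if j0 < K then 1 else 0)" if "K \<le> n"
proof -
  have "{x. x < K \<and> own0 n x = j0} \<subseteq> (if j0 < K then {j0} else {})"
    using that by (auto simp: own0_def)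
  then have "card {x. x < K \<and> own0 n x = j0} \<le> card (if j0 < K then {j0} else ({}::nat set))"
    by (intro card_mono) auto
  then show ?thesis unfolding cnt_def by (auto split: if_splits)
qed

lemma pre_0: "pre n j 0 = 0" unfolding pre_def by simp
lemma pre_Suc: "pre n j (Suc v) = pre n j v + length (posl n j v)" unfolding pre_def by simp

lemma cum_Suc:
  assumes "1 \<le> j" "j \<le> n"
  shows "cum n j (Suc T) = cum n j T + int (length (posl n j (T mod 5)))"
proof (cases "T mod 5 = 4")
  case True
  then have d: "Suc T div 5 = T div 5 + 1" "Suc T mod 5 = 0" by presburger+
  have "int (pre n j 5) = a5 n j" using pg_all[OF assms] by simp
  moreover have "pre n j 5 = pre n j 4 + length (posl n j 4)" using pre_Suc[of n j 4] by (simp add: numeral_eq_Suc)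
  ultimately have "a5 n j = int (pre n j 4) + int (length (posl n j 4))" by simp
  then show ?thesis unfolding cum_def using True d pre_0 by (simp add: algebra_simps)
next
  case False
  then have "Suc T div 5 = T div 5" "Suc T mod 5 = Suc (T mod 5)" by presburger+
  then show ?thesis unfolding cum_def using pre_Suc by simp
qed

lemma tail_cnt:
  assumes "q \<le> n" "j0 < n"
  shows "int (cnt n j0 (n + T * n + q)) \<le> 1 + cum (int n) (int j0 + 1) T
            + int (length (filter (\<lambda>p. p \<le> int q) (posl (int n) (int j0 + 1) (T mod 5))))"
  using assms
proof (induction T arbitrary: q)
  case 0
  have "cnt n j0 (n + 0 * n + q) \<le> cnt n j0 n + card {x. n \<le> x \<and> x < n + 0 * n + q \<and> own0 n x = j0}"
    by (rule cnt_split) simp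
  moreover have "cnt n j0 n \<le> 1" using cnt_head[of n n j0] by (auto split: if_splits)
  moreover have "card {x. n + 0 * n \<le> x \<and> x < n + 0 * n + q \<and> own0 n x = j0}
     \<le> length (filter (\<lambda>p. p \<le> int q) (posl (int n) (int j0 + 1) (0 mod 5)))"
    by (rule round_count) (use 0 in auto)
  ultimately show ?case unfolding cum_def pre_def by simp
next
  case (Suc T)
  have j: "1 \<le> int j0 + 1" "int j0 + 1 \<le> int n" using Suc by auto
  define B where "B = n + Suc T * n"
  have eB: "n + T * n + n = B" unfolding B_def by simp
  have A1: "cnt n j0 (B + q) \<le> cnt n j0 B + card {x. B \<le> x \<and> x < B + q \<and> own0 n x = j0}"
    by (rule cnt_split) simp
  have A2: "int (cnt n j0 B) \<le> 1 + cum (int n) (int j0 + 1) T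
            + int (length (filter (\<lambda>p. p \<le> int n) (posl (int n) (int j0 + 1) (T mod 5))))"
    using Suc.IH[of n] Suc.prems unfolding eB by auto
  have A3: "int (length (filter (\<lambda>p. p \<le> int n) (posl (int n) (int j0 + 1) (T mod 5)))) \<le> int (length (posl (int n) (int j0 + 1) (T mod 5)))"
    using length_filter_le by (simp only: of_nat_le_iff)
  have A4: "card {x. B \<le> x \<and> x < B + q \<and> own0 n x = j0}
     \<le> length (filter (\<lambda>p. p \<le> int q) (posl (int n) (int j0 + 1) (Suc T mod 5)))"
    unfolding B_def by (rule round_count) (use Suc in auto)
  have A5: "cum (int n) (int j0 + 1) (Suc T) = cum (int n) (int j0 + 1) T + int (length (posl (int n) (int j0 + 1) (T mod 5)))"
    by (rule cum_Suc[OF j])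
  have "int (cnt n j0 (B + q)) \<le> int (cnt n j0 B) + int (card {x. B \<le> x \<and> x < B + q \<and> own0 n x = j0})"
    using A1 by linarith
  moreover have "int (card {x. B \<le> x \<and> x < B + q \<and> own0 n x = j0})
     \<le> int (length (filter (\<lambda>p. p \<le> int q) (posl (int n) (int j0 + 1) (Suc T mod 5))))"
    using A4 by linarith
  ultimately have "int (cnt n j0 (B + q)) \<le> 1 + cum (int n) (int j0 + 1) (Suc T)
      + int (length (filter (\<lambda>p. p \<le> int q) (posl (int n) (int j0 + 1) (Suc T mod 5))))"
    using A2 A3 A5 by linarith
  then show ?case unfolding B_def .
qed

definition al :: "nat \<Rightarrow> nat \<Rightarrow> real" where "al n j0 = real_of_int (a5 (int n) (int j0 + 1)) / 5"
definition be :: "nat \<Rightarrow> nat \<Rightarrow> real" where "be n j0 = max 0 (1 - al n j0 * (real j0 + 1) / real n)"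
definition ga :: "nat \<Rightarrow> nat \<Rightarrow> real" where "ga n j0 = 8/5 - al n j0 - be n j0"

lemma coef_nonneg:
  assumes "1 \<le> n" "j0 < n"
  shows "0 \<le> al n j0" "0 \<le> be n j0" "0 \<le> ga n j0"
proof -
  have g: "a5 (int n) (int j0 + 1) * int n + max 0 (5 * int n - a5 (int n) (int j0 + 1) * (int j0 + 1)) \<le> 8 * int n"
    using pg_all[of "int j0 + 1" "int n"] assms by auto
  show "0 \<le> al n j0" unfolding al_def using a5_pos by simp
  show "0 \<le> be n j0" unfolding be_def by simp
  let ?a = "real_of_int (a5 (int n) (int j0 + 1))"
  have g2: "?a * n + max 0 (5 * n - ?a * (j0 + 1)) \<le> 8 * n"
  proof -
    have "real_of_int (a5 (int n) (int j0 + 1) * int n + max 0 (5 * int n - a5 (int n) (int j0 + 1) * (int j0 + 1))) \<le> real_of_int (8 * int n)"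
      using g by (simp only: of_int_le_iff)
    then show ?thesis by (simp add: of_int_max algebra_simps)
  qed
  have np: "0 < real n" using assms by simp
  have "be n j0 = max 0 (5 * n - ?a * (j0 + 1)) / (5 * n)"
    unfolding be_def al_def using np by (simp add: max_divide_distrib_right field_simps)
  then have "(al n j0 + be n j0) * (5 * n) = ?a * n + max 0 (5 * n - ?a * (j0 + 1))"
    unfolding al_def using np by (simp add: field_simps)
  then have "(al n j0 + be n j0) * (5 * n) \<le> 8/5 * (5 * n)" using g2 by simp
  then have "al n j0 + be n j0 \<le> 8/5" using np by (simp add: mult_le_cancel_right)
  then show "0 \<le> ga n j0" unfolding ga_def by simp
qed


lemma be_eq:
  assumes "1 \<le> n"
  shows "be n j0 = real_of_int (max 0 (5 * int n - a5 (int n) (int j0 + 1) * (int j0 + 1))) / (5 * n)"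
proof -
  have np: "0 < real n" using assms by simp
  show ?thesis unfolding be_def al_def using np
    by (simp add: of_int_max max_divide_distrib_right field_simps)
qed

lemma cnt_bound:
  assumes "1 \<le> n" "j0 < n"
  shows "real (cnt n j0 K) \<le> al n j0 * K / n + (if 1 \<le> K then be n j0 else 0)
     + (if n \<le> K then ga n j0 else 0) + (if n + 1 \<le> K then ga n j0 else 0)"
proof -
  have np: "0 < real n" using assms by simp
  note cf = coef_nonneg[OF assms]
  show ?thesis
  proof (cases "K \<le> n")
    case True
    have h: "cnt n j0 K \<le> (if j0 < K then 1 else 0)" using cnt_head True by blast
    show ?thesis
    proof (cases "j0 < K")
      case False
      then have "cnt n j0 K = 0" using h by simp
      then show ?thesis using cf np by (simp add: divide_nonneg_nonneg)
    next
      case jK: True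
      then have c1: "real (cnt n j0 K) \<le> 1" using h by simp
      have "1 - al n j0 * (real j0 + 1) / real n \<le> be n j0" unfolding be_def by simp
      moreover have "al n j0 * (real j0 + 1) / real n \<le> al n j0 * K / n"
        using jK cf np by (intro divide_right_mono mult_left_mono) auto
      ultimately have "1 \<le> al n j0 * K / n + be n j0" by linarith
      then show ?thesis using c1 jK cf by auto
    qed
  next
    case False
    define T where "T = (K - n - 1) div n"
    define q where "q = (K - n - 1) mod n + 1"
    have dm: "K - n - 1 = T * n + (K - n - 1) mod n" unfolding T_def by simp
    have ml: "(K - n - 1) mod n < n" using assms by simp
    have Kq: "K = n + T * n + q" "q \<le> n" "1 \<le> q" using False dm ml unfolding q_def by linarith+
    define u where "u = T div 5"
    define v where "v = T mod 5"
    have Tuv: "T = 5 * u + v" "v < 5" unfolding u_def v_def by auto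
    let ?j = "int j0 + 1"
    let ?f = "length (filter (\<lambda>p. p \<le> int q) (posl (int n) ?j v))"
    let ?M = "max 0 (5 * int n - a5 (int n) ?j * ?j)"
    have tc: "int (cnt n j0 K) \<le> 1 + (a5 (int n) ?j * int u + int (pre (int n) ?j v)) + int ?f"
      using tail_cnt[OF Kq(2) assms(2), of T] unfolding Kq(1) cum_def u_def v_def by simp
    have iq: "5 * int n * int (1 + pre (int n) ?j v + ?f)
        \<le> a5 (int n) ?j * (int n * (1 + int v) + int q) + (16 - 2 * a5 (int n) ?j) * int n - ?M"
      using IQ_all[of ?j "int n" "int q" v] assms Kq Tuv by simp
    have "5 * int n * int (cnt n j0 K) \<le> 5 * int n * (1 + (a5 (int n) ?j * int u + int (pre (int n) ?j v)) + int ?f)"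
      using tc by (intro mult_left_mono) auto
    also have "\<dots> = 5 * int n * int (1 + pre (int n) ?j v + ?f) + 5 * int n * a5 (int n) ?j * int u"
      by (simp add: algebra_simps)
    also have "\<dots> \<le> a5 (int n) ?j * (int n * (1 + int v) + int q) + (16 - 2 * a5 (int n) ?j) * int n - ?M
         + 5 * int n * a5 (int n) ?j * int u" using iq by linarith
    also have "\<dots> = a5 (int n) ?j * int K + (16 - 2 * a5 (int n) ?j) * int n - ?M"
      unfolding Kq(1) Tuv by (simp add: algebra_simps)
    finally have I: "5 * int n * int (cnt n j0 K) \<le> a5 (int n) ?j * int K + (16 - 2 * a5 (int n) ?j) * int n - ?M" .
    have R: "5 * real n * real (cnt n j0 K) \<le> real_of_int (a5 (int n) ?j) * K + (16 - 2 * real_of_int (a5 (int n) ?j)) * n - real_of_int ?M"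
    proof -
      have "real_of_int (5 * int n * int (cnt n j0 K)) \<le> real_of_int (a5 (int n) ?j * int K + (16 - 2 * a5 (int n) ?j) * int n - ?M)"
        using I by (simp only: of_int_le_iff)
      then show ?thesis by simp
    qed
    have "real (cnt n j0 K) \<le> (real_of_int (a5 (int n) ?j) * K + (16 - 2 * real_of_int (a5 (int n) ?j)) * n - real_of_int ?M) / (5 * n)"
      using R np by (simp add: field_simps)
    also have "\<dots> = al n j0 * K / n + be n j0 + 2 * ga n j0"
      unfolding be_eq[OF assms(1)] ga_def be_eq[OF assms(1)] al_def using np by (simp add: field_simps)
    finally show ?thesis using False by simp
  qed
qed


lemma abel_id:
  fixes f d :: "nat \<Rightarrow> real"
  shows "(\<Sum>x<N. f x * d x) = (\<Sum>x<N. (\<Sum>y<Suc x. f y) * (d x - d (Suc x))) + (\<Sum>y<N. f y) * d N"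
  by (induction N) (simp_all add: algebra_simps)

lemma abel:
  fixes d w :: "nat \<Rightarrow> real"
  assumes mono: "\<And>x. d (Suc x) \<le> d x" and nn: "\<And>x. 0 \<le> d x"
    and cb: "\<And>K. K \<le> N \<Longrightarrow> real (card {x. x < K \<and> P x}) \<le> (\<Sum>x<K. w x)"
  shows "(\<Sum>x<N. if P x then d x else 0) \<le> (\<Sum>x<N. w x * d x)"
proof -
  define u :: "nat \<Rightarrow> real" where "u x = (if P x then 1 else 0)" for x
  have U: "(\<Sum>y<K. u y) = real (card {x. x < K \<and> P x})" for K
  proof -
    have "(\<Sum>y<K. u y) = (\<Sum>y\<in>{x. x < K \<and> P x}. 1)"
      unfolding u_def by (rule sum.mono_neutral_cong_right) auto
    then show ?thesis by simp
  qed
  have "(\<Sum>x<N. if P x then d x else 0) = (\<Sum>x<N. u x * d x)" unfolding u_def by (intro sum.cong) auto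
  also have "\<dots> = (\<Sum>x<N. (\<Sum>y<Suc x. u y) * (d x - d (Suc x))) + (\<Sum>y<N. u y) * d N" by (rule abel_id)
  also have "\<dots> \<le> (\<Sum>x<N. (\<Sum>y<Suc x. w y) * (d x - d (Suc x))) + (\<Sum>y<N. w y) * d N"
  proof (rule add_mono)
    show "(\<Sum>x<N. (\<Sum>y<Suc x. u y) * (d x - d (Suc x))) \<le> (\<Sum>x<N. (\<Sum>y<Suc x. w y) * (d x - d (Suc x)))"
    proof (rule sum_mono)
      fix x assume "x \<in> {..<N}"
      then have "(\<Sum>y<Suc x. u y) \<le> (\<Sum>y<Suc x. w y)" unfolding U by (intro cb) auto
      then show "(\<Sum>y<Suc x. u y) * (d x - d (Suc x)) \<le> (\<Sum>y<Suc x. w y) * (d x - d (Suc x))"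
        using mono[of x] by (intro mult_right_mono) auto
    qed
    show "(\<Sum>y<N. u y) * d N \<le> (\<Sum>y<N. w y) * d N"
      unfolding U using cb[of N] nn[of N] by (intro mult_right_mono) auto
  qed
  also have "\<dots> = (\<Sum>x<N. w x * d x)" by (rule abel_id[symmetric])
  finally show ?thesis .
qed

definition wt :: "nat \<Rightarrow> nat \<Rightarrow> nat \<Rightarrow> real" where
"wt n j0 x = al n j0 / n + (if x = 0 then be n j0 else 0) + (if x = n - 1 then ga n j0 else 0) + (if x = n then ga n j0 else 0)"

lemma sum_wt:
  assumes "1 \<le> n"
  shows "(\<Sum>x<K. wt n j0 x) = al n j0 * K / n + (if 1 \<le> K then be n j0 else 0)
     + (if n \<le> K then ga n j0 else 0) + (if n + 1 \<le> K then ga n j0 else 0)"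
proof -
  have a: "(\<Sum>x<K. (if x = a then c else 0)) = (if a < K then c else (0::real))" for a c
    by (simp add: sum.delta')
  have "n - 1 < K \<longleftrightarrow> n \<le> K" using assms by arith
  then show ?thesis unfolding wt_def sum.distrib a by (auto simp: Suc_le_eq)
qed

lemma agent_bound:
  fixes d :: "nat \<Rightarrow> real"
  assumes "1 \<le> n" "j0 < n" "\<And>x. d (Suc x) \<le> d x" "\<And>x. 0 \<le> d x"
  shows "(\<Sum>x<N. if own0 n x = j0 then d x else 0)
     \<le> al n j0 / n * (\<Sum>x<N. d x) + be n j0 * d 0 + ga n j0 * (d (n - 1) + d n)"
proof -
  note cf = coef_nonneg[OF assms(1,2)]
  have "(\<Sum>x<N. if own0 n x = j0 then d x else 0) \<le> (\<Sum>x<N. wt n j0 x * d x)"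
  proof (rule abel[where d=d])
    show "\<And>x. d (Suc x) \<le> d x" by (rule assms(3))
    show "\<And>x. 0 \<le> d x" by (rule assms(4))
  next
    fix K
    show "real (card {x. x < K \<and> own0 n x = j0}) \<le> (\<Sum>x<K. wt n j0 x)"
      using cnt_bound[OF assms(1,2), of K] unfolding sum_wt[OF assms(1)] cnt_def .
  qed
  also have "\<dots> = al n j0 / n * (\<Sum>x<N. d x) + (\<Sum>x<N. if x = 0 then be n j0 * d x else 0)
     + (\<Sum>x<N. if x = n - 1 then ga n j0 * d x else 0) + (\<Sum>x<N. if x = n then ga n j0 * d x else 0)"
  proof -
    have e: "wt n j0 x * d x = al n j0 / n * d x + (if x = 0 then be n j0 * d x else 0)
       + (if x = n - 1 then ga n j0 * d x else 0) + (if x = n then ga n j0 * d x else 0)" for x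
      unfolding wt_def by (simp add: algebra_simps)
    show ?thesis unfolding e sum.distrib sum_distrib_left ..
  qed
  also have "\<dots> \<le> al n j0 / n * (\<Sum>x<N. d x) + be n j0 * d 0 + ga n j0 * d (n - 1) + ga n j0 * d n"
    using cf assms(4) by (simp add: sum.delta')
  finally show ?thesis by (simp add: algebra_simps)
qed



lemma run_len: "length (run P tau m r) = r"
  by (induction r) (simp_all add: Let_def)

lemma run_nth: "r < r' \<Longrightarrow> run P tau m r' ! r = run P tau m (Suc r) ! r"
proof (induction r')
  case 0 then show ?case by simp
next
  case (Suc r')
  show ?case
  proof (cases "r < r'")
    case True
    then have "run P tau m (Suc r') ! r = run P tau m r' ! r"
      by (simp add: Let_def nth_append run_len)
    then show ?thesis using Suc True by simp
  next
    case False
    then have "r = r'" using Suc by simp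
    then show ?thesis by simp
  qed
qed

lemma remaining_card:
  assumes "distinct h" "set h \<subseteq> {..<m}"
  shows "card (remaining m h) = m - length h"
proof -
  have "card (remaining m h) = card {0..<m} - card (set h)"
    unfolding remaining_def using assms(2) by (intro card_Diff_subset) auto
  then show ?thesis using distinct_card[OF assms(1)] by simp
qed

lemma run_inv:
  assumes "r \<le> m"
  shows "distinct (run P tau m r) \<and> set (run P tau m r) \<subseteq> {..<m}"
  using assms
proof (induction r)
  case 0 then show ?case by simp
next
  case (Suc r)
  let ?h = "run P tau m r"
  have ih: "distinct ?h" "set ?h \<subseteq> {..<m}" using Suc by auto
  have "card (remaining m ?h) = m - r" using remaining_card[OF ih] run_len by simp
  then have ne: "remaining m ?h \<noteq> {}" using Suc by auto
  have fin: "finite (remaining m ?h)" unfolding remaining_def by simp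
  let ?x = "P (tau ! r) tau ?h"
  let ?y = "if ?x \<in> remaining m ?h then ?x else Min (remaining m ?h)"
  have y: "?y \<in> remaining m ?h" using Min_in[OF fin ne] by auto
  then have "?y \<notin> set ?h" "?y < m" unfolding remaining_def by auto
  then show ?case using ih by (simp add: Let_def)
qed

lemma run_pick:
  assumes "r < m"
  shows "run P tau m (Suc r) ! r \<in> remaining m (run P tau m r)
    \<and> (P (tau ! r) tau (run P tau m r) \<in> remaining m (run P tau m r) \<longrightarrow>
         run P tau m (Suc r) ! r = P (tau ! r) tau (run P tau m r))"
proof -
  let ?h = "run P tau m r"
  have ih: "distinct ?h" "set ?h \<subseteq> {..<m}" using run_inv[of r m] assms by auto
  have "card (remaining m ?h) = m - r" using remaining_card[OF ih] run_len by simp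
  then have ne: "remaining m ?h \<noteq> {}" using assms by auto
  have fin: "finite (remaining m ?h)" unfolding remaining_def by simp
  show ?thesis using Min_in[OF fin ne] by (simp add: Let_def nth_append run_len)
qed

lemma dsorted_facts:
  fixes ci :: "nat \<Rightarrow> real" and m :: nat
  defines "L \<equiv> rev (sort (map ci [0..<m]))"
  shows "length L = m" "\<And>i j. i < j \<Longrightarrow> j < m \<Longrightarrow> L ! j \<le> L ! i"
    "\<And>k. dsorted ci m k = (if k < m then L ! k else 0)"
    "\<And>v. length (filter (\<lambda>z. v \<le> z) L) = card {y. y < m \<and> v \<le> ci y}"
    "sum_list L = (\<Sum>j<m. ci j)" "set L = ci ` {..<m}"
proof -
  show "set L = ci ` {..<m}" unfolding L_def by auto
  show l: "length L = m" unfolding L_def by simp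
  have "sorted_wrt (\<lambda>x y. y \<le> x) L" unfolding L_def sorted_wrt_rev by simp
  then show "\<And>i j. i < j \<Longrightarrow> j < m \<Longrightarrow> L ! j \<le> L ! i" using l sorted_wrt_nth_less by fastforce
  show "\<And>k. dsorted ci m k = (if k < m then L ! k else 0)" unfolding dsorted_def L_def Let_def by simp
  have ms: "mset L = mset (map ci [0..<m])" unfolding L_def by simp
  show "\<And>v. length (filter (\<lambda>z. v \<le> z) L) = card {y. y < m \<and> v \<le> ci y}"
  proof -
    fix v
    have lf: "length (filter P xs) = size (filter_mset P (mset xs))" for P and xs :: "real list"
      by (metis mset_filter size_mset)
    have "length (filter (\<lambda>z. v \<le> z) L) = size (filter_mset (\<lambda>z. v \<le> z) (mset L))"
      by (rule lf)
    also have "\<dots> = length (filter (\<lambda>z. v \<le> z) (map ci [0..<m]))" unfolding ms by (rule lf[symmetric])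
    also have "\<dots> = card {i. i < m \<and> v \<le> map ci [0..<m] ! i}" by (simp add: length_filter_conv_card)
    also have "card {i. i < m \<and> v \<le> map ci [0..<m] ! i} = card {y. y < m \<and> v \<le> ci y}"
      by (rule arg_cong[where f=card]) auto
    finally show "length (filter (\<lambda>z. v \<le> z) L) = card {y. y < m \<and> v \<le> ci y}" .
  qed
  have "sum_list L = sum_list (map ci [0..<m])"
    by (metis ms sum_mset_sum_list)
  also have "\<dots> = (\<Sum>j<m. ci j)" using sum_set_upt_conv_sum_list_nat[of ci 0 m] by (simp add: lessThan_atLeast0)
  finally show "sum_list L = (\<Sum>j<m. ci j)" .
qed


lemma dsorted_ge:
  fixes ci :: "nat \<Rightarrow> real"
  assumes "R \<subseteq> {..<m}" "card R = k" "1 \<le> k" "\<forall>y\<in>R. v \<le> ci y"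
  shows "v \<le> dsorted ci m (k - 1)"
proof -
  define L where "L = rev (sort (map ci [0..<m]))"
  note F = dsorted_facts[where ci=ci and m=m, folded L_def]
  have "k \<le> m" using assms(1,2) by (metis card_lessThan card_mono finite_lessThan)
  have "card R \<le> card {y. y < m \<and> v \<le> ci y}" using assms(1,4) by (intro card_mono) auto
  then have c: "k \<le> card {i. i < m \<and> v \<le> L ! i}" using F(4)[of v] assms(2) F(1)
    by (simp add: length_filter_conv_card)
  show ?thesis
  proof (rule ccontr)
    assume "\<not> v \<le> dsorted ci m (k - 1)"
    moreover have "k - 1 < m" using \<open>k \<le> m\<close> assms(3) by simp
    ultimately have lt: "L ! (k - 1) < v" using F(3)[of "k - 1"] by simp
    have "{i. i < m \<and> v \<le> L ! i} \<subseteq> {..<k - 1}"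
    proof
      fix i assume i: "i \<in> {i. i < m \<and> v \<le> L ! i}"
      show "i \<in> {..<k - 1}"
      proof (rule ccontr)
        assume "i \<notin> {..<k - 1}"
        then have "k - 1 \<le> i" by simp
        then have "L ! i \<le> L ! (k - 1)" using F(2) i by (cases "k - 1 = i") auto
        then show False using lt i by simp
      qed
    qed
    then have "card {i. i < m \<and> v \<le> L ! i} \<le> k - 1" by (metis card_lessThan card_mono finite_lessThan)
    then show False using c assms(3) by simp
  qed
qed

lemma dsorted_nonneg:
  fixes ci :: "nat \<Rightarrow> real"
  assumes "\<forall>j<m. 0 \<le> ci j"
  shows "0 \<le> dsorted ci m k"
proof -
  define L where "L = rev (sort (map ci [0..<m]))"
  note F = dsorted_facts[where ci=ci and m=m, folded L_def]
  show ?thesis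
  proof (cases "k < m")
    case True
    then have "L ! k \<in> set L" using F(1) by simp
    then show ?thesis using F(3)[of k] F(6) True assms by auto
  qed (simp add: F(3))
qed

lemma dsorted_mono:
  fixes ci :: "nat \<Rightarrow> real"
  assumes "\<forall>j<m. 0 \<le> ci j"
  shows "dsorted ci m (Suc k) \<le> dsorted ci m k"
proof -
  define L where "L = rev (sort (map ci [0..<m]))"
  note F = dsorted_facts[where ci=ci and m=m, folded L_def]
  show ?thesis
  proof (cases "Suc k < m")
    case True then show ?thesis using F(2)[of k "Suc k"] F(3) by simp
  next
    case False
    then have "dsorted ci m (Suc k) = 0" using F(3) by simp
    then show ?thesis using dsorted_nonneg[OF assms] by simp
  qed
qed

lemma dsorted_sum:
  fixes ci :: "nat \<Rightarrow> real"
  shows "(\<Sum>k<m. dsorted ci m k) = (\<Sum>j<m. ci j)"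
proof -
  define L where "L = rev (sort (map ci [0..<m]))"
  note F = dsorted_facts[where ci=ci and m=m, folded L_def]
  have "(\<Sum>k<m. dsorted ci m k) = (\<Sum>k<m. L ! k)" using F(3) by simp
  also have "\<dots> = sum_list L" using F(1) by (simp add: sum_list_sum_nth lessThan_atLeast0)
  finally show ?thesis using F(5) by simp
qed

lemma greedy_val:
  fixes ci :: "nat \<Rightarrow> real"
  assumes g: "greedy ci m s" and r: "r < m" and P: "P (tau ! r) = s"
  shows "ci (run P tau m (Suc r) ! r) \<le> dsorted ci m (m - 1 - r)"
proof -
  let ?h = "run P tau m r"
  have ih: "distinct ?h" "set ?h \<subseteq> {..<m}" using run_inv[of r m] r by auto
  have card: "card (remaining m ?h) = m - r" using remaining_card[OF ih] run_len by simp
  then have ne: "remaining m ?h \<noteq> {}" using r by auto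
  have x: "s tau ?h \<in> remaining m ?h" "\<forall>y\<in>remaining m ?h. ci (s tau ?h) \<le> ci y"
    using g ne unfolding greedy_def by auto
  have e: "run P tau m (Suc r) ! r = s tau ?h" using run_pick[OF r, of P tau] x P by simp
  have "ci (s tau ?h) \<le> dsorted ci m ((m - r) - 1)"
    by (rule dsorted_ge[OF _ card]) (use x r in \<open>auto simp: remaining_def\<close>)
  then show ?thesis using e by (simp add: diff_commute)
qed

lemma disv_bound:
  fixes ci :: "nat \<Rightarrow> real"
  assumes g: "greedy ci m s"
  shows "disvalue ci m tau (Q(i := s)) i \<le> (\<Sum>r<m. if tau ! r = i then dsorted ci m (m - 1 - r) else 0)"
proof -
  have "disvalue ci m tau (Q(i := s)) i = (\<Sum>r<m. if tau ! r = i then ci (run (Q(i := s)) tau m m ! r) else 0)"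
    unfolding disvalue_def by simp
  also have "\<dots> \<le> (\<Sum>r<m. if tau ! r = i then dsorted ci m (m - 1 - r) else 0)"
  proof (rule sum_mono)
    fix r assume r: "r \<in> {..<m}"
    show "(if tau ! r = i then ci (run (Q(i := s)) tau m m ! r) else 0) \<le> (if tau ! r = i then dsorted ci m (m - 1 - r) else 0)"
    proof (cases "tau ! r = i")
      case True
      have "run (Q(i := s)) tau m m ! r = run (Q(i := s)) tau m (Suc r) ! r" using r run_nth by auto
      then show ?thesis using greedy_val[OF g, of r "Q(i := s)" tau] True r by simp
    qed simp
  qed
  finally show ?thesis .
qed


definition tauf :: "nat \<Rightarrow> nat \<Rightarrow> nat \<Rightarrow> nat list" where
"tauf n m k = map (\<lambda>r. (own0 n (m - 1 - r) + k) mod n) [0..<m]"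

definition Dm :: "nat \<Rightarrow> nat \<Rightarrow> nat list pmf" where
"Dm n m = map_pmf (tauf n m) (pmf_of_set {..<n})"

lemma Dm_exp:
  assumes "1 \<le> n"
  shows "measure_pmf.expectation (Dm n m) f = (\<Sum>k<n. f (tauf n m k)) / n"
proof -
  have "0 \<in> {..<n}" using assms by simp
  then have "{..<n} \<noteq> {}" by blast
  then show ?thesis unfolding Dm_def by (simp add: integral_pmf_of_set)
qed

lemma Dm_set:
  assumes "1 \<le> n"
  shows "set_pmf (Dm n m) = tauf n m ` {..<n}"
proof -
  have "0 \<in> {..<n}" using assms by simp
  then have "{..<n} \<noteq> {}" by blast
  then show ?thesis unfolding Dm_def by simp
qed

lemma Dm_valid:
  assumes "1 \<le> n"
  shows "valid_mechanism n m (Dm n m)"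
  unfolding valid_mechanism_def Dm_set[OF assms] using assms by (auto simp: tauf_def)

lemma modeq:
  fixes a k i n :: nat
  assumes "a < n" "k < n" "i < n"
  shows "(a + k) mod n = i \<longleftrightarrow> a = (i + n - k) mod n"
proof (cases "a + k < n")
  case True
  then have "(a + k) mod n = a + k" by simp
  moreover have "(i + n - k) mod n = (if k \<le> i then i - k else i + n - k)"
    using assms by (auto simp: mod_if)
  ultimately show ?thesis using assms True by auto
next
  case False
  then have "(a + k) mod n = a + k - n" using assms by (simp add: mod_if)
  moreover have "(i + n - k) mod n = (if k \<le> i then i - k else i + n - k)"
    using assms by (auto simp: mod_if)
  ultimately show ?thesis using assms False by auto
qed

lemma tauf_nth:
  assumes "x < m"
  shows "tauf n m k ! (m - Suc x) = (own0 n x + k) mod n"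
  using assms unfolding tauf_def by simp

lemma sum_tau:
  fixes d :: "nat \<Rightarrow> real"
  shows "(\<Sum>r<m. if tauf n m k ! r = i then d (m - 1 - r) else 0)
     = (\<Sum>x<m. if (own0 n x + k) mod n = i then d x else 0)"
proof -
  let ?g = "\<lambda>x. if tauf n m k ! (m - Suc x) = i then d x else 0"
  have "(\<Sum>r<m. if tauf n m k ! r = i then d (m - 1 - r) else 0) = (\<Sum>r<m. ?g (m - Suc r))"
    by (intro sum.cong) (auto simp: Suc_diff_Suc)
  also have "\<dots> = (\<Sum>x<m. ?g x)" by (rule sum.nat_diff_reindex)
  also have "\<dots> = (\<Sum>x<m. if (own0 n x + k) mod n = i then d x else 0)"
    by (intro sum.cong) (auto simp: tauf_nth)
  finally show ?thesis .
qed


lemma expost: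
  fixes ci :: "nat \<Rightarrow> real"
  assumes n: "1 \<le> n" and k: "k < n" and i: "i < n" and nn: "\<forall>j<m. 0 \<le> ci j" and g: "greedy ci m s"
  shows "disvalue ci m (tauf n m k) (Q(i := s)) i \<le> 8/5 * CS ci n m"
proof -
  let ?d = "dsorted ci m"
  define j0 where "j0 = (i + n - k) mod n"
  have j0: "j0 < n" using n by (simp add: j0_def)
  note cf = coef_nonneg[OF n j0]
  have "disvalue ci m (tauf n m k) (Q(i := s)) i \<le> (\<Sum>r<m. if tauf n m k ! r = i then ?d (m - 1 - r) else 0)"
    by (rule disv_bound[OF g])
  also have "\<dots> = (\<Sum>x<m. if (own0 n x + k) mod n = i then ?d x else 0)" by (rule sum_tau)
  also have "\<dots> = (\<Sum>x<m. if own0 n x = j0 then ?d x else 0)"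
  proof (intro sum.cong refl)
    fix x
    have "own0 n x < n" using own0_lt[OF n] .
    then have "(own0 n x + k) mod n = i \<longleftrightarrow> own0 n x = j0" unfolding j0_def using modeq k i by blast
    then show "(if (own0 n x + k) mod n = i then ?d x else 0) = (if own0 n x = j0 then ?d x else 0)" by simp
  qed
  also have "\<dots> \<le> al n j0 / n * (\<Sum>x<m. ?d x) + be n j0 * ?d 0 + ga n j0 * (?d (n - 1) + ?d n)"
    by (rule agent_bound[OF n j0]) (use dsorted_mono dsorted_nonneg nn in auto)
  also have "\<dots> \<le> al n j0 * CS ci n m + be n j0 * CS ci n m + ga n j0 * CS ci n m"
  proof -
    have s: "(\<Sum>x<m. ?d x) = (\<Sum>j<m. ci j)" by (rule dsorted_sum)
    have c1: "(\<Sum>j<m. ci j) / n \<le> CS ci n m" unfolding CS_def by simp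
    have c2: "?d 0 \<le> CS ci n m" unfolding CS_def by simp
    have c3: "?d (n - 1) + ?d n \<le> CS ci n m" unfolding CS_def by simp
    have "al n j0 / n * (\<Sum>x<m. ?d x) = al n j0 * ((\<Sum>j<m. ci j) / n)" unfolding s by simp
    also have "\<dots> \<le> al n j0 * CS ci n m" using c1 cf by (intro mult_left_mono) auto
    finally have "al n j0 / n * (\<Sum>x<m. ?d x) \<le> al n j0 * CS ci n m" .
    moreover have "be n j0 * ?d 0 \<le> be n j0 * CS ci n m" using c2 cf by (intro mult_left_mono) auto
    moreover have "ga n j0 * (?d (n - 1) + ?d n) \<le> ga n j0 * CS ci n m" using c3 cf by (intro mult_left_mono) auto
    ultimately show ?thesis by linarith
  qed
  also have "\<dots> = 8/5 * CS ci n m" unfolding ga_def by (simp add: algebra_simps)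
  finally show ?thesis .
qed

lemma expect:
  fixes ci :: "nat \<Rightarrow> real"
  assumes n: "1 \<le> n" and i: "i < n" and g: "greedy ci m s"
  shows "measure_pmf.expectation (Dm n m) (\<lambda>tau. disvalue ci m tau (Q(i := s)) i) \<le> (\<Sum>j<m. ci j) / n"
proof -
  let ?d = "dsorted ci m"
  have np: "0 < real n" using n by simp
  have "(\<Sum>k<n. disvalue ci m (tauf n m k) (Q(i := s)) i) \<le> (\<Sum>k<n. \<Sum>x<m. if (own0 n x + k) mod n = i then ?d x else 0)"
  proof (rule sum_mono)
    fix k assume "k \<in> {..<n}"
    show "disvalue ci m (tauf n m k) (Q(i := s)) i \<le> (\<Sum>x<m. if (own0 n x + k) mod n = i then ?d x else 0)"
      using disv_bound[OF g, of "tauf n m k" Q i] sum_tau[where m=m and n=n and k=k and i=i and d="?d"] by simp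
  qed
  also have "\<dots> = (\<Sum>x<m. \<Sum>k<n. if (own0 n x + k) mod n = i then ?d x else 0)" by (rule sum.swap)
  also have "\<dots> = (\<Sum>x<m. ?d x)"
  proof (intro sum.cong refl)
    fix x
    have o: "own0 n x < n" using own0_lt[OF n] .
    define c where "c = (i + n - own0 n x) mod n"
    have c: "c < n" using n by (simp add: c_def)
    have "(\<Sum>k<n. if (own0 n x + k) mod n = i then ?d x else 0) = (\<Sum>k<n. if k = c then ?d x else 0)"
    proof (intro sum.cong refl)
      fix k assume "k \<in> {..<n}"
      then have "(k + own0 n x) mod n = i \<longleftrightarrow> k = c" unfolding c_def using modeq o i by blast
      then show "(if (own0 n x + k) mod n = i then ?d x else 0) = (if k = c then ?d x else 0)" by (simp add: add.commute)
    qed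
    also have "\<dots> = ?d x" using c by (simp add: sum.delta')
    finally show "(\<Sum>k<n. if (own0 n x + k) mod n = i then ?d x else 0) = ?d x" .
  qed
  also have "\<dots> = (\<Sum>j<m. ci j)" by (rule dsorted_sum)
  finally have "(\<Sum>k<n. disvalue ci m (tauf n m k) (Q(i := s)) i) \<le> (\<Sum>j<m. ci j)" .
  then show ?thesis unfolding Dm_exp[OF n] using np by (simp add: divide_right_mono)
qed


definition PQ :: "(nat \<Rightarrow> nat) \<Rightarrow> (nat \<Rightarrow> strategy) \<Rightarrow> (nat \<Rightarrow> strategy)" where
"PQ \<sigma> Q' = (\<lambda>l tau h. Q' (\<sigma> l) (map \<sigma> tau) h)"

definition Ts :: "(nat \<Rightarrow> nat) \<Rightarrow> strategy \<Rightarrow> strategy" where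
"Ts \<sigma> s' = (\<lambda>tau h. s' (map \<sigma> tau) h)"

lemma run_rel: "r \<le> length tau \<Longrightarrow> run Q' (map \<sigma> tau) m r = run (PQ \<sigma> Q') tau m r"
  by (induction r) (simp_all add: Let_def PQ_def)

lemma disv_rel:
  assumes "length tau = m" "inj \<sigma>"
  shows "disvalue ci m (map \<sigma> tau) Q' (\<sigma> j) = disvalue ci m tau (PQ \<sigma> Q') j"
proof -
  have r: "run Q' (map \<sigma> tau) m m = run (PQ \<sigma> Q') tau m m" using run_rel assms(1) by simp
  show ?thesis unfolding disvalue_def Let_def r
    using assms by (intro sum.cong refl) (auto simp: inj_eq)
qed

lemma PQ_upd: "inj \<sigma> \<Longrightarrow> PQ \<sigma> (Q'(\<sigma> j := s')) = (PQ \<sigma> Q')(j := Ts \<sigma> s')"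
  unfolding PQ_def Ts_def by (rule ext) (auto simp: inj_eq)

lemma PQ_inv: "(\<And>x. \<sigma>' (\<sigma> x) = x) \<Longrightarrow> PQ \<sigma> (PQ \<sigma>' Q) = Q"
  unfolding PQ_def by (intro ext) (simp add: map_idI)

lemma Ts_inv: "(\<And>x. \<sigma>' (\<sigma> x) = x) \<Longrightarrow> Ts \<sigma> (Ts \<sigma>' s) = s"
  unfolding Ts_def by (intro ext) (simp add: map_idI)

lemma SUP_surj:
  fixes g :: "'a \<Rightarrow> real"
  assumes "\<And>y. f (f' y) = y"
  shows "(SUP x. g (f x)) = (SUP y. g y)" "(INF x. g (f x)) = (INF y. g y)"
proof -
  have "range (\<lambda>x. g (f x)) = range g"
  proof
    show "range (\<lambda>x. g (f x)) \<subseteq> range g" by auto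
    show "range g \<subseteq> range (\<lambda>x. g (f x))"
    proof
      fix z assume "z \<in> range g"
      then obtain y where "z = g y" by auto
      then have "z = g (f (f' y))" using assms by simp
      then show "z \<in> range (\<lambda>x. g (f x))" by blast
    qed
  qed
  then show "(SUP x. g (f x)) = (SUP y. g y)" "(INF x. g (f x)) = (INF y. g y)" by simp_all
qed

definition rot :: "nat \<Rightarrow> nat \<Rightarrow> nat \<Rightarrow> nat" where
"rot n s x = (if x < n then (x + s) mod n else x)"

lemma mod_rot:
  fixes a s n :: nat
  assumes "a < n" "s \<le> n"
  shows "((a + s) mod n + (n - s)) mod n = a"
proof -
  have "((a + s) mod n + (n - s)) mod n = (a + s + (n - s)) mod n" by (simp add: mod_add_left_eq)
  also have "a + s + (n - s) = a + n" using assms by simp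
  finally show ?thesis using assms by simp
qed

lemma rot_inv: "s \<le> n \<Longrightarrow> rot n (n - s) (rot n s x) = x"
  unfolding rot_def using mod_rot[of x n s] by auto

lemma rot_inj: "s \<le> n \<Longrightarrow> inj (rot n s)"
  by (metis injI rot_inv)

lemma rot_tauf:
  assumes "1 \<le> n"
  shows "map (rot n s) (tauf n m k) = tauf n m ((k + s) mod n)"
proof -
  have "rot n s ((own0 n x + k) mod n) = (own0 n x + (k + s) mod n) mod n" for x
  proof -
    have "(own0 n x + k) mod n < n" using assms by simp
    then have "rot n s ((own0 n x + k) mod n) = ((own0 n x + k) mod n + s) mod n" unfolding rot_def by simp
    also have "\<dots> = (own0 n x + k + s) mod n" by (simp add: mod_add_left_eq)
    also have "\<dots> = (own0 n x + (k + s) mod n) mod n" by (simp add: mod_add_right_eq add.assoc)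
    finally show ?thesis .
  qed
  then show ?thesis unfolding tauf_def by simp
qed

lemma sum_rot:
  fixes F :: "nat list \<Rightarrow> real"
  assumes "1 \<le> n" "s \<le> n"
  shows "(\<Sum>k<n. F (tauf n m ((k + s) mod n))) = (\<Sum>k<n. F (tauf n m k))"
proof (rule sum.reindex_bij_witness[where j = "\<lambda>k. (k + s) mod n" and i = "\<lambda>k. (k + (n - s)) mod n"])
  fix a assume "a \<in> {..<n}"
  then show "((a + s) mod n + (n - s)) mod n = a" using mod_rot assms by auto
next
  fix a assume "a \<in> {..<n}"
  then show "(a + s) mod n \<in> {..<n}" using assms by auto
next
  fix b assume b: "b \<in> {..<n}"
  have "((b + (n - s)) mod n + s) mod n = (b + (n - s) + s) mod n" by (simp add: mod_add_left_eq)
  also have "b + (n - s) + s = b + n" using assms by simp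
  finally show "((b + (n - s)) mod n + s) mod n = b" using b by simp
next
  fix b assume "b \<in> {..<n}"
  then show "(b + (n - s)) mod n \<in> {..<n}" using assms by auto
qed simp

lemma ra_rot:
  assumes n: "1 \<le> n" and s: "s \<le> n"
  shows "ra_value ci m (Dm n m) (rot n s j) = ra_value ci m (Dm n m) j"
proof -
  let ?\<sigma> = "rot n s" and ?\<sigma>' = "rot n (n - s)"
  have inv: "\<And>x. ?\<sigma>' (?\<sigma> x) = x" using rot_inv[OF s] by simp
  have inj: "inj ?\<sigma>" using rot_inj[OF s] .
  let ?E = "\<lambda>s Q. measure_pmf.expectation (Dm n m) (\<lambda>tau. disvalue ci m tau (Q(j := s)) j)"
  have key: "measure_pmf.expectation (Dm n m) (\<lambda>tau. disvalue ci m tau (Q'(?\<sigma> j := s')) (?\<sigma> j))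
      = ?E (Ts ?\<sigma> s') (PQ ?\<sigma> Q')" for s' Q'
  proof -
    let ?F = "\<lambda>tau. disvalue ci m tau (Q'(?\<sigma> j := s')) (?\<sigma> j)"
    have "(\<Sum>k<n. ?F (tauf n m k)) = (\<Sum>k<n. ?F (tauf n m ((k + s) mod n)))"
      using sum_rot[OF n s, of ?F m] by simp
    also have "\<dots> = (\<Sum>k<n. ?F (map ?\<sigma> (tauf n m k)))" using rot_tauf[OF n] by simp
    also have "\<dots> = (\<Sum>k<n. disvalue ci m (tauf n m k) ((PQ ?\<sigma> Q')(j := Ts ?\<sigma> s')) j)"
    proof (intro sum.cong refl)
      fix k
      have l: "length (tauf n m k) = m" unfolding tauf_def by simp
      show "?F (map ?\<sigma> (tauf n m k)) = disvalue ci m (tauf n m k) ((PQ ?\<sigma> Q')(j := Ts ?\<sigma> s')) j"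
        using disv_rel[OF l inj, of ci "Q'(?\<sigma> j := s')" j] PQ_upd[OF inj] by simp
    qed
    finally show ?thesis unfolding Dm_exp[OF n] by simp
  qed
  have "ra_value ci m (Dm n m) (?\<sigma> j) = (INF s'. SUP Q'. ?E (Ts ?\<sigma> s') (PQ ?\<sigma> Q'))"
    unfolding ra_value_def key ..
  also have "\<dots> = (INF s'. SUP Q. ?E (Ts ?\<sigma> s') Q)"
  proof -
    have "(SUP Q'. ?E (Ts ?\<sigma> s') (PQ ?\<sigma> Q')) = (SUP Q. ?E (Ts ?\<sigma> s') Q)" for s'
      by (rule SUP_surj(1)[where f'="PQ ?\<sigma>'"]) (rule PQ_inv[where \<sigma>="rot n s" and \<sigma>'="rot n (n - s)", OF inv])
    then show ?thesis by simp
  qed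
  also have "\<dots> = (INF s. SUP Q. ?E s Q)"
    by (rule SUP_surj(2)[where f'="Ts ?\<sigma>'"]) (rule Ts_inv[where \<sigma>="rot n s" and \<sigma>'="rot n (n - s)", OF inv])
  also have "\<dots> = ra_value ci m (Dm n m) j" unfolding ra_value_def ..
  finally show ?thesis .
qed

lemma EF_Dm:
  assumes n: "1 \<le> n"
  shows "EF_RA n m (Dm n m) c"
  unfolding EF_RA_def
proof (intro allI impI)
  fix i j assume i: "i < n" and j: "j < n"
  define s where "s = (j + n - i) mod n"
  have s: "s \<le> n" using n unfolding s_def by (simp add: less_imp_le)
  have "rot n s i = (i + (j + n - i) mod n) mod n" using i unfolding rot_def s_def by simp
  also have "\<dots> = (i + (j + n - i)) mod n" by (simp add: mod_add_right_eq)
  also have "i + (j + n - i) = j + n" using i by simp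
  finally have "rot n s i = j" using j by simp
  then have "ra_value (c i) m (Dm n m) j = ra_value (c i) m (Dm n m) i" using ra_rot[OF n s] by metis
  then show "\<not> ra_value (c i) m (Dm n m) j < ra_value (c i) m (Dm n m) i" by simp
qed

theorem corollary2:
  fixes n m :: nat
  assumes "n \<ge> 1"
  shows "\<exists>D. valid_mechanism n m D \<and>
    (\<forall>c :: nat \<Rightarrow> nat \<Rightarrow> real. (\<forall>i<n. \<forall>j<m. c i j \<ge> 0) \<longrightarrow>
       EF_RA n m D c \<and>
       (\<forall>i<n. \<forall>s Q. greedy (c i) m s \<longrightarrow>
          measure_pmf.expectation D (\<lambda>tau. disvalue (c i) m tau (Q(i := s)) i)
            \<le> (\<Sum>j<m. c i j) / real n) \<and>
       (\<forall>i<n. \<forall>s Q. greedy (c i) m s \<longrightarrow>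
          (\<forall>tau\<in>set_pmf D. disvalue (c i) m tau (Q(i := s)) i \<le> 8/5 * CS (c i) n m)))"
  proof -
  have n: "1 \<le> n" using assms .
  show ?thesis
  proof (rule exI[of _ "Dm n m"], rule conjI)
    show "valid_mechanism n m (Dm n m)" by (rule Dm_valid[OF n])
  next
    show "\<forall>c :: nat \<Rightarrow> nat \<Rightarrow> real. (\<forall>i<n. \<forall>j<m. c i j \<ge> 0) \<longrightarrow>
       EF_RA n m (Dm n m) c \<and>
       (\<forall>i<n. \<forall>s Q. greedy (c i) m s \<longrightarrow>
          measure_pmf.expectation (Dm n m) (\<lambda>tau. disvalue (c i) m tau (Q(i := s)) i)
            \<le> (\<Sum>j<m. c i j) / real n) \<and>
       (\<forall>i<n. \<forall>s Q. greedy (c i) m s \<longrightarrow>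
          (\<forall>tau\<in>set_pmf (Dm n m). disvalue (c i) m tau (Q(i := s)) i \<le> 8/5 * CS (c i) n m))"
    proof (intro allI impI)
      fix c :: "nat \<Rightarrow> nat \<Rightarrow> real"
      assume "\<forall>i<n. \<forall>j<m. 0 \<le> c i j"
      then have nn: "\<And>i. i < n \<Longrightarrow> \<forall>j<m. 0 \<le> c i j" by auto
      have A: "EF_RA n m (Dm n m) c" by (rule EF_Dm[OF n])
      have B: "\<forall>i<n. \<forall>s Q. greedy (c i) m s \<longrightarrow>
          measure_pmf.expectation (Dm n m) (\<lambda>tau. disvalue (c i) m tau (Q(i := s)) i)
            \<le> (\<Sum>j<m. c i j) / real n"
        using expect[OF n] by blast
      have C: "\<forall>i<n. \<forall>s Q. greedy (c i) m s \<longrightarrow>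
          (\<forall>tau\<in>set_pmf (Dm n m). disvalue (c i) m tau (Q(i := s)) i \<le> 8/5 * CS (c i) n m)"
      proof (intro allI impI ballI)
        fix i s Q tau
        assume i: "i < n" and g: "greedy (c i) m s" and tau: "tau \<in> set_pmf (Dm n m)"
        then obtain k where k: "k < n" "tau = tauf n m k" unfolding Dm_set[OF n] by auto
        show "disvalue (c i) m tau (Q(i := s)) i \<le> 8/5 * CS (c i) n m"
          unfolding k(2) by (rule expost[OF n k(1) i nn[OF i] g])
      qed
      show "EF_RA n m (Dm n m) c \<and>
       (\<forall>i<n. \<forall>s Q. greedy (c i) m s \<longrightarrow>
          measure_pmf.expectation (Dm n m) (\<lambda>tau. disvalue (c i) m tau (Q(i := s)) i)
            \<le> (\<Sum>j<m. c i j) / real n) \<and>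
       (\<forall>i<n. \<forall>s Q. greedy (c i) m s \<longrightarrow>
          (\<forall>tau\<in>set_pmf (Dm n m). disvalue (c i) m tau (Q(i := s)) i \<le> 8/5 * CS (c i) n m))"
        using A B C by blast
    qed
  qed
qed

end
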